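(* Let $f:\mathbb{R}\to[0,\infty)$ be a bounded probability density. Let $h\in L^\infty(\mathbb{R})$ with $h\ge0$, and let $\ell\in\mathbb{N}$ be such that $$\sup_{x\in[a,a+1)}f_\ell(x)\le\int_{a-1}^{a+2}h(w)\,\mathrm{d}w\qquad\text{for all }a\in\mathbb{R}.$$ Then $$\sup_{x\in[a,a+1)}f_{2\ell}(x)\le\int_{a-1}^{a+2}\Phi_\ell(h)(w)\,\mathrm{d}w\qquad\text{for all }a\in\mathbb{R}.$$
   Context: $f_1:=f$, $f_{k+1}:=f_k*f$, i.e. $f_{k+1}(x)=\int_\mathbb{R} f_k(x-y)f(y)\,\mathrm{d}y$. For $n\in\mathbb{N}$ and $h\in L^\infty(\mathbb{R})$, the function $\Phi_n(h)$ is defined by $\Phi_n(h)(x):=2\int_{\{z:\,|z|>(|x|-3)/2\}}f_n(z)\,h(x-z)\,\mathrm{d}z$ for $x\in\mathbb{R}$. *)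

theory Defs
  imports "HOL-Analysis.Analysis"
begin

text \<open>Convolution powers: conv_pow f (Suc 0) = f_1 = f,
  conv_pow f (Suc k + 1) = f_{k+1} = f_k * f. The value at index 0 is unused.\<close>
fun conv_pow :: "(real \<Rightarrow> real) \<Rightarrow> nat \<Rightarrow> real \<Rightarrow> real" where
  "conv_pow f 0 = (\<lambda>x. 0)"
| "conv_pow f (Suc 0) = f"
| "conv_pow f (Suc (Suc k)) =
     (\<lambda>x. LINT y|lborel. conv_pow f (Suc k) (x - y) * f y)"

definition Phi :: "(real \<Rightarrow> real) \<Rightarrow> nat \<Rightarrow> (real \<Rightarrow> real) \<Rightarrow> real \<Rightarrow> real" where
  "Phi f n h x = 2 * (LINT z:{z. \<bar>z\<bar> > (\<bar>x\<bar> - 3) / 2}|lborel. conv_pow f n z * h (x - z))"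

end

theory Submission imports Defs begin

lemma distr_refl: "distr lborel borel (\<lambda>x. t + -1 * x) = (lborel::real measure)"
  using lborel_real_affine[of "-1" t] by (simp add: density_1)

lemma AE_refl:
  assumes "AE x in lborel. P (x::real)" "{x. P x} \<in> sets borel"
  shows "AE z in lborel. P (u - z)"
proof -
  have "AE x in distr lborel borel (\<lambda>x. u + -1 * x). P x" using assms(1) by (subst distr_refl) simp
  then show ?thesis using assms(2) by (subst (asm) AE_distr_iff) (auto simp: pred_def)
qed

lemma nn_shift: "g \<in> borel_measurable borel \<Longrightarrow> (\<integral>\<^sup>+x. g (x - y) \<partial>lborel) = (\<integral>\<^sup>+x. g x \<partial>lborel)"
  for g :: "real \<Rightarrow> ennreal"
  by (subst nn_integral_real_affine[where c=1 and t="-y"]) auto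

lemma nn_refl: "g \<in> borel_measurable borel \<Longrightarrow> (\<integral>\<^sup>+x. g (u - x) \<partial>lborel) = (\<integral>\<^sup>+x. g x \<partial>lborel)"
  for g :: "real \<Rightarrow> ennreal"
  by (subst nn_integral_real_affine[where c="-1" and t="u"]) auto

lemma ennreal_integral_le_nn:
  fixes g :: "'a \<Rightarrow> real"
  shows "ennreal (integral\<^sup>L M g) \<le> (\<integral>\<^sup>+x. ennreal (g x) \<partial>M)"
proof (cases "integrable M g")
  case True
  then have i2: "integrable M (\<lambda>x. max 0 (g x))" by auto
  have "integral\<^sup>L M g \<le> integral\<^sup>L M (\<lambda>x. max 0 (g x))"
    using True i2 by (intro integral_mono) auto
  then have "ennreal (integral\<^sup>L M g) \<le> ennreal (integral\<^sup>L M (\<lambda>x. max 0 (g x)))"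
    by (rule ennreal_leI)
  also have "\<dots> = (\<integral>\<^sup>+x. ennreal (max 0 (g x)) \<partial>M)"
    using nn_integral_eq_integral[OF i2] by simp
  also have "\<dots> = (\<integral>\<^sup>+x. ennreal (g x) \<partial>M)"
    by (intro nn_integral_cong) (simp add: max_def ennreal_neg)
  finally show ?thesis .
next
  case False
  then show ?thesis by (simp add: not_integrable_integral_eq)
qed

locale cs = fixes f :: "real \<Rightarrow> real" and C :: real
  assumes fm[measurable]: "f \<in> borel_measurable borel" and fnn: "\<And>x. 0 \<le> f x"
    and fC: "\<And>x. f x \<le> C" and fint: "integrable lborel f" and fprob: "(LINT x|lborel. f x) = 1"
begin

lemma fone: "(\<integral>\<^sup>+x. ennreal (f x) \<partial>lborel) = 1"
  using nn_integral_eq_integral[OF fint] fnn fprob by simp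

lemma F_props: "k \<ge> 1 \<Longrightarrow> conv_pow f k \<in> borel_measurable borel \<and> (\<forall>x. 0 \<le> conv_pow f k x \<and> conv_pow f k x \<le> C)
   \<and> (\<integral>\<^sup>+x. ennreal (conv_pow f k x) \<partial>lborel) = 1"
proof (induction k rule: nat_less_induct)
  case (1 k)
  show ?case
  proof (cases k)
    case 0 then show ?thesis using 1 by simp
  next
    case (Suc m)
    show ?thesis
    proof (cases m)
      case 0 then show ?thesis using Suc fnn fC fone by simp
    next
      case (Suc j)
      define g where "g = conv_pow f (Suc j)"
      have IH: "g \<in> borel_measurable borel" "\<And>x. 0 \<le> g x" "\<And>x. g x \<le> C"
        "(\<integral>\<^sup>+x. ennreal (g x) \<partial>lborel) = 1"
        using 1(1)[rule_format, of "Suc j"] \<open>k = Suc m\<close> Suc by (auto simp: g_def)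
      note [measurable] = IH(1)
      have kk: "conv_pow f k = (\<lambda>x. LINT y|lborel. g (x - y) * f y)"
        using \<open>k = Suc m\<close> Suc by (simp add: g_def)
      have C0: "0 \<le> C" using fnn fC order_trans by blast
      have intg: "integrable lborel (\<lambda>y. g (x - y) * f y)" for x
        apply (rule Bochner_Integration.integrable_bound[where f="\<lambda>y. C * f y"])
        using fint apply simp
         apply measurable
        using IH fnn C0 by (auto intro!: mult_right_mono)
      have meas: "conv_pow f k \<in> borel_measurable borel"
        unfolding kk by measurable
      have nn: "0 \<le> conv_pow f k x" for x
        unfolding kk using IH fnn by (auto intro!: integral_nonneg)
      have le: "conv_pow f k x \<le> C" for x
      proof -
        have "(LINT y|lborel. g (x - y) * f y) \<le> (LINT y|lborel. C * f y)"
          using intg fint IH fnn by (intro integral_mono) (auto intro!: mult_right_mono)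
        then show ?thesis using fprob kk by simp
      qed
      have eq: "ennreal (conv_pow f k x) = (\<integral>\<^sup>+y. ennreal (g (x - y)) * ennreal (f y) \<partial>lborel)" for x
        unfolding kk using nn_integral_eq_integral[OF intg[of x]] IH fnn
        by (simp add: ennreal_mult)
      have "(\<integral>\<^sup>+x. ennreal (conv_pow f k x) \<partial>lborel)
          = (\<integral>\<^sup>+x. (\<integral>\<^sup>+y. ennreal (g (x - y)) * ennreal (f y) \<partial>lborel) \<partial>lborel)"
        by (simp add: eq)
      also have "\<dots> = (\<integral>\<^sup>+y. (\<integral>\<^sup>+x. ennreal (g (x - y)) * ennreal (f y) \<partial>lborel) \<partial>lborel)"
        by (rule lborel_pair.Fubini'[symmetric]) measurable
      also have "\<dots> = (\<integral>\<^sup>+y. (\<integral>\<^sup>+x. ennreal (g (x - y)) \<partial>lborel) * ennreal (f y) \<partial>lborel)"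
        by (simp add: nn_integral_multc)
      also have "\<dots> = (\<integral>\<^sup>+y. ennreal (f y) \<partial>lborel)"
        using nn_shift[of "\<lambda>x. ennreal (g x)"] IH by simp
      finally show ?thesis using meas nn le fone by simp
    qed
  qed
qed

lemma Fm[measurable]: "k \<ge> 1 \<Longrightarrow> conv_pow f k \<in> borel_measurable borel"
  using F_props by blast
lemma Fnn: "k \<ge> 1 \<Longrightarrow> 0 \<le> conv_pow f k x"
  using F_props by blast
lemma FC: "k \<ge> 1 \<Longrightarrow> conv_pow f k x \<le> C"
  using F_props by blast
lemma Fone: "k \<ge> 1 \<Longrightarrow> (\<integral>\<^sup>+x. ennreal (conv_pow f k x) \<partial>lborel) = 1"
  using F_props by blast

lemma C0: "0 \<le> C" using fnn fC order_trans by blast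

lemma step_eq: assumes "k \<ge> 1"
  shows "ennreal (conv_pow f (Suc k) x) = (\<integral>\<^sup>+y. ennreal (conv_pow f k (x - y)) * ennreal (f y) \<partial>lborel)"
proof -
  obtain j where k: "k = Suc j" using assms by (cases k) auto
  define g where "g = conv_pow f k"
  have [measurable]: "g \<in> borel_measurable borel" using Fm assms g_def by simp
  have intg: "integrable lborel (\<lambda>y. g (x - y) * f y)"
    apply (rule Bochner_Integration.integrable_bound[where f="\<lambda>y. C * f y"])
    using fint apply simp
     apply measurable
    using Fnn FC assms fnn C0 by (auto simp: g_def intro!: mult_right_mono)
  have "conv_pow f (Suc k) x = (LINT y|lborel. g (x - y) * f y)"
    by (simp add: k g_def)
  then show ?thesis
    using nn_integral_eq_integral[OF intg] Fnn[OF assms] fnn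
    by (simp add: ennreal_mult g_def)
qed

lemma conv_add: assumes "m \<ge> 1" "n \<ge> 1"
  shows "ennreal (conv_pow f (m + n) x) =
    (\<integral>\<^sup>+z. ennreal (conv_pow f m (x - z)) * ennreal (conv_pow f n z) \<partial>lborel)"
  using assms(2)
proof (induction n arbitrary: x rule: nat_induct_at_least)
  case base
  then show ?case using step_eq[OF assms(1)] by simp
next
  case (Suc n)
  have [measurable]: "conv_pow f m \<in> borel_measurable borel" "conv_pow f n \<in> borel_measurable borel"
    using Fm assms Suc by auto
  have "ennreal (conv_pow f (m + Suc n) x) =
     (\<integral>\<^sup>+y. ennreal (conv_pow f (m + n) (x - y)) * ennreal (f y) \<partial>lborel)"
    using step_eq[of "m+n" x] assms by simp
  also have "\<dots> = (\<integral>\<^sup>+y. (\<integral>\<^sup>+z. ennreal (conv_pow f m (x - y - z)) * ennreal (conv_pow f n z) * ennreal (f y) \<partial>lborel) \<partial>lborel)"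
    by (simp add: Suc.IH nn_integral_multc)
  also have "\<dots> = (\<integral>\<^sup>+y. (\<integral>\<^sup>+w. ennreal (conv_pow f m (x - w)) * ennreal (conv_pow f n (w - y)) * ennreal (f y) \<partial>lborel) \<partial>lborel)"
  proof (rule nn_integral_cong)
    fix y
    show "(\<integral>\<^sup>+z. ennreal (conv_pow f m (x - y - z)) * ennreal (conv_pow f n z) * ennreal (f y) \<partial>lborel)
      = (\<integral>\<^sup>+w. ennreal (conv_pow f m (x - w)) * ennreal (conv_pow f n (w - y)) * ennreal (f y) \<partial>lborel)"
      using nn_shift[of "\<lambda>z. ennreal (conv_pow f m (x - y - z)) * ennreal (conv_pow f n z) * ennreal (f y)" y]
      by simp
  qed
  also have "\<dots> = (\<integral>\<^sup>+w. (\<integral>\<^sup>+y. ennreal (conv_pow f m (x - w)) * ennreal (conv_pow f n (w - y)) * ennreal (f y) \<partial>lborel) \<partial>lborel)"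
    by (rule lborel_pair.Fubini') measurable
  also have "\<dots> = (\<integral>\<^sup>+w. ennreal (conv_pow f m (x - w)) * (\<integral>\<^sup>+y. ennreal (conv_pow f n (w - y)) * ennreal (f y) \<partial>lborel) \<partial>lborel)"
    by (simp add: nn_integral_cmult mult.assoc)
  also have "\<dots> = (\<integral>\<^sup>+w. ennreal (conv_pow f m (x - w)) * ennreal (conv_pow f (Suc n) w) \<partial>lborel)"
    using step_eq[of n] Suc by simp
  finally show ?case .
qed

end


locale cs2 = cs +
  fixes h :: "real \<Rightarrow> real" and l :: nat and Ch :: real
  assumes hm[measurable]: "h \<in> borel_measurable borel"
    and hC: "AE x in lborel. \<bar>h x\<bar> \<le> Ch"
    and hnn: "AE x in lborel. h x \<ge> 0"
    and l1: "l \<ge> 1"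
    and hyp: "\<And>a::real. Sup (conv_pow f l ` {a..<a+1}) \<le> (LINT w:{a-1..a+2}|lborel. h w)"
begin

abbreviation "G \<equiv> conv_pow f l"

lemma Gm[measurable]: "G \<in> borel_measurable borel" using Fm l1 by simp

lemma Gint: "integrable lborel G"
  using Fone[OF l1] Fnn[OF l1] by (intro integrableI_nonneg) auto

lemma Gprob: "(LINT z|lborel. G z) = 1"
  using integral_eq_nn_integral[of G lborel] Fone[OF l1] Fnn[OF l1] by simp

lemma stepA: "ennreal (conv_pow f (2*l) x) \<le>
   2 * (\<integral>\<^sup>+z. indicator {z. \<bar>x\<bar>/2 \<le> \<bar>z\<bar>} z * ennreal (G z) * ennreal (G (x - z)) \<partial>lborel)"
proof -
  define A where "A = {z::real. \<bar>x\<bar>/2 \<le> \<bar>z\<bar>}"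
  have [measurable]: "A \<in> sets borel" unfolding A_def by measurable
  define k where "k z = indicator A z * ennreal (G z) * ennreal (G (x - z))" for z
  have [measurable]: "k \<in> borel_measurable borel" unfolding k_def by measurable
  have "ennreal (conv_pow f (2*l) x) = (\<integral>\<^sup>+z. ennreal (G (x - z)) * ennreal (G z) \<partial>lborel)"
    using conv_add[OF l1 l1, of x] by (simp add: mult_2)
  also have "\<dots> \<le> (\<integral>\<^sup>+z. k z + k (x - z) \<partial>lborel)"
  proof (rule nn_integral_mono)
    fix z
    have "\<bar>x\<bar>/2 \<le> \<bar>z\<bar> \<or> \<bar>x\<bar>/2 \<le> \<bar>x - z\<bar>" by arith
    then have "z \<in> A \<or> x - z \<in> A" unfolding A_def by auto
    then show "ennreal (G (x - z)) * ennreal (G z) \<le> k z + k (x - z)"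
      unfolding k_def by (auto simp: mult.commute intro: add_increasing add_increasing2)
  qed
  also have "\<dots> = (\<integral>\<^sup>+z. k z \<partial>lborel) + (\<integral>\<^sup>+z. k (x - z) \<partial>lborel)"
    by (rule nn_integral_add) auto
  also have "\<dots> = 2 * (\<integral>\<^sup>+z. k z \<partial>lborel)"
    using nn_refl[of k x] by (simp add: mult_2)
  finally show ?thesis unfolding k_def A_def .
qed

lemma stepB: assumes "x \<in> {a..<a+1}"
  shows "ennreal (G (x - z)) \<le> (\<integral>\<^sup>+u. indicator {a-1..a+2} u * ennreal (h (u - z)) \<partial>lborel)"
proof -
  have bdd: "bdd_above (G ` {a-z..<a-z+1})" using FC[OF l1] by (auto intro!: bdd_aboveI)
  have "G (x - z) \<le> Sup (G ` {a-z..<a-z+1})"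
    using assms by (intro cSup_upper[OF _ bdd]) auto
  also have "\<dots> \<le> (LINT w:{a-z-1..a-z+2}|lborel. h w)"
    using hyp[of "a-z"] by simp
  finally have "ennreal (G (x - z)) \<le> ennreal (LINT w:{a-z-1..a-z+2}|lborel. h w)"
    by (rule ennreal_leI)
  also have "\<dots> \<le> (\<integral>\<^sup>+w. ennreal (indicator {a-z-1..a-z+2} w *\<^sub>R h w) \<partial>lborel)"
    unfolding set_lebesgue_integral_def by (rule ennreal_integral_le_nn)
  also have "\<dots> = (\<integral>\<^sup>+w. indicator {a-z-1..a-z+2} w * ennreal (h w) \<partial>lborel)"
    by (intro nn_integral_cong) (simp split: split_indicator)
  also have "\<dots> = (\<integral>\<^sup>+u. indicator {a-z-1..a-z+2} (u - z) * ennreal (h (u - z)) \<partial>lborel)"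
    by (rule nn_shift[symmetric]) measurable
  also have "\<dots> = (\<integral>\<^sup>+u. indicator {a-1..a+2} u * ennreal (h (u - z)) \<partial>lborel)"
    by (intro nn_integral_cong) (simp split: split_indicator)
  finally show ?thesis .
qed

definition "S u = {z::real. (\<bar>u\<bar> - 3) / 2 < \<bar>z\<bar>}"

lemma stepD_int: "integrable lborel (\<lambda>z. indicator (S u) z *\<^sub>R (G z * h (u - z)))"
proof -
  have [measurable]: "S u \<in> sets borel" unfolding S_def by measurable
  have ae: "AE z in lborel. \<bar>h (u - z)\<bar> \<le> Ch"
    by (rule AE_refl[OF hC]) measurable
  have bnd: "AE z in lborel. norm (indicator (S u) z *\<^sub>R (G z * h (u - z))) \<le> norm (Ch * G z)"
    using ae
  proof eventually_elim
    case (elim z)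
    have "\<bar>G z * h (u - z)\<bar> \<le> G z * Ch"
      using elim Fnn[OF l1, of z] by (simp add: abs_mult mult_left_mono)
    moreover have "0 \<le> Ch" using elim by linarith
    ultimately show ?case using Fnn[OF l1, of z]
      by (auto simp: indicator_def mult.commute)
  qed
  show ?thesis
    by (rule Bochner_Integration.integrable_bound[where f="\<lambda>z. Ch * G z", OF _ _ bnd])
      (simp add: Gint, measurable)
qed

lemma stepD: "ennreal (Phi f l h u) =
   2 * (\<integral>\<^sup>+z. indicator (S u) z * ennreal (G z) * ennreal (h (u - z)) \<partial>lborel)"
proof -
  have [measurable]: "S u \<in> sets borel" unfolding S_def by measurable
  have ae: "AE z in lborel. 0 \<le> h (u - z)"
    by (rule AE_refl[OF hnn]) measurable
  have ae2: "AE z in lborel. 0 \<le> indicator (S u) z *\<^sub>R (G z * h (u - z))"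
    using ae by eventually_elim (simp add: Fnn[OF l1])
  have eq: "Phi f l h u = 2 * (LINT z|lborel. indicator (S u) z *\<^sub>R (G z * h (u - z)))"
    unfolding Phi_def set_lebesgue_integral_def S_def by simp
  have nn0: "0 \<le> (LINT z|lborel. indicator (S u) z *\<^sub>R (G z * h (u - z)))"
    by (rule integral_nonneg_AE[OF ae2])
  have "ennreal (LINT z|lborel. indicator (S u) z *\<^sub>R (G z * h (u - z)))
     = (\<integral>\<^sup>+z. ennreal (indicator (S u) z *\<^sub>R (G z * h (u - z))) \<partial>lborel)"
    using nn_integral_eq_integral[OF stepD_int ae2] by simp
  also have "\<dots> = (\<integral>\<^sup>+z. indicator (S u) z * ennreal (G z) * ennreal (h (u - z)) \<partial>lborel)"
    using ae
  proof (intro nn_integral_cong_AE, eventually_elim)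
    case (elim z) then show ?case using Fnn[OF l1, of z]
      by (simp add: ennreal_mult split: split_indicator)
  qed
  finally show ?thesis using eq nn0 by (simp add: ennreal_mult)
qed

lemma Phi_bounds: "0 \<le> Phi f l h u \<and> Phi f l h u \<le> 2 * Ch"
proof -
  have [measurable]: "S u \<in> sets borel" unfolding S_def by measurable
  have ae: "AE z in lborel. 0 \<le> h (u - z) \<and> \<bar>h (u - z)\<bar> \<le> Ch"
    using AE_refl[OF hnn, of u] AE_refl[OF hC, of u] by auto
  have eq: "Phi f l h u = 2 * (LINT z|lborel. indicator (S u) z *\<^sub>R (G z * h (u - z)))"
    unfolding Phi_def set_lebesgue_integral_def S_def by simp
  have "0 \<le> (LINT z|lborel. indicator (S u) z *\<^sub>R (G z * h (u - z)))"
    using ae by (intro integral_nonneg_AE) (auto elim!: eventually_mono simp: Fnn[OF l1])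
  moreover have "(LINT z|lborel. indicator (S u) z *\<^sub>R (G z * h (u - z))) \<le> (LINT z|lborel. Ch * G z)"
    using ae
  proof (intro integral_mono_AE stepD_int)
    show "integrable lborel (\<lambda>z. Ch * G z)" using Gint by simp
    show "AE z in lborel. indicator (S u) z *\<^sub>R (G z * h (u - z)) \<le> Ch * G z"
      using ae
    proof eventually_elim
      case (elim z)
      then have "G z * h (u - z) \<le> G z * Ch" using Fnn[OF l1, of z] by (intro mult_left_mono) auto
      then show ?case using elim Fnn[OF l1, of z] by (auto simp: indicator_def mult.commute)
    qed
  qed
  ultimately show ?thesis using eq Gprob by simp
qed

lemma Phi_meas[measurable]: "Phi f l h \<in> borel_measurable borel"
  unfolding Phi_def set_lebesgue_integral_def by measurable

lemma main_pt: assumes x: "x \<in> {a..<a+1}"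
  shows "conv_pow f (2*l) x \<le> (LINT u:{a-1..a+2}|lborel. Phi f l h u)"
proof -
  define A where "A = {z::real. \<bar>x\<bar>/2 \<le> \<bar>z\<bar>}"
  define I where "I = {a-1..a+2::real}"
  have [measurable]: "A \<in> sets borel" "I \<in> sets borel" unfolding A_def I_def by measurable
  have AS: "u \<in> I \<Longrightarrow> A \<subseteq> S u" for u
    using x unfolding A_def I_def S_def by auto
  have "ennreal (conv_pow f (2*l) x) \<le>
     2 * (\<integral>\<^sup>+z. indicator A z * ennreal (G z) * ennreal (G (x - z)) \<partial>lborel)"
    using stepA unfolding A_def .
  also have "\<dots> \<le> 2 * (\<integral>\<^sup>+z. indicator A z * ennreal (G z) *
        (\<integral>\<^sup>+u. indicator I u * ennreal (h (u - z)) \<partial>lborel) \<partial>lborel)"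
    using stepB[OF x] unfolding I_def
    by (intro mult_left_mono nn_integral_mono) auto
  also have "\<dots> = 2 * (\<integral>\<^sup>+z. (\<integral>\<^sup>+u. indicator I u * (indicator A z * ennreal (G z) * ennreal (h (u - z))) \<partial>lborel) \<partial>lborel)"
    by (simp add: nn_integral_cmult[symmetric] mult.assoc mult.left_commute)
  also have "\<dots> = 2 * (\<integral>\<^sup>+u. (\<integral>\<^sup>+z. indicator I u * (indicator A z * ennreal (G z) * ennreal (h (u - z))) \<partial>lborel) \<partial>lborel)"
    by (rule arg_cong[where f="(*) 2"], rule lborel_pair.Fubini') measurable
  also have "\<dots> \<le> 2 * (\<integral>\<^sup>+u. indicator I u * (\<integral>\<^sup>+z. indicator (S u) z * ennreal (G z) * ennreal (h (u - z)) \<partial>lborel) \<partial>lborel)"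
  proof (intro mult_left_mono nn_integral_mono)
    fix u
    show "(\<integral>\<^sup>+z. indicator I u * (indicator A z * ennreal (G z) * ennreal (h (u - z))) \<partial>lborel)
      \<le> indicator I u * (\<integral>\<^sup>+z. indicator (S u) z * ennreal (G z) * ennreal (h (u - z)) \<partial>lborel)"
    proof (cases "u \<in> I")
      case True
      then have "(\<integral>\<^sup>+z. indicator I u * (indicator A z * ennreal (G z) * ennreal (h (u - z))) \<partial>lborel)
         = (\<integral>\<^sup>+z. indicator A z * ennreal (G z) * ennreal (h (u - z)) \<partial>lborel)" by simp
      also have "\<dots> \<le> (\<integral>\<^sup>+z. indicator (S u) z * ennreal (G z) * ennreal (h (u - z)) \<partial>lborel)"
        using AS[OF True] by (intro nn_integral_mono) (auto split: split_indicator)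
      finally show ?thesis using True by simp
    qed simp
  qed simp
  also have "\<dots> = (\<integral>\<^sup>+u. indicator I u * ennreal (Phi f l h u) \<partial>lborel)"
  proof -
    have m: "(\<lambda>u. indicator I u * (\<integral>\<^sup>+z. indicator (S u) z * ennreal (G z) * ennreal (h (u - z)) \<partial>lborel)) \<in> borel_measurable lborel"
      unfolding S_def by measurable
    show ?thesis
      by (simp add: stepD nn_integral_cmult[OF m, symmetric] mult.left_commute)
  qed
  also have "\<dots> = (\<integral>\<^sup>+u. ennreal (indicator I u *\<^sub>R Phi f l h u) \<partial>lborel)"
    by (intro nn_integral_cong) (simp split: split_indicator)
  also have "\<dots> = ennreal (LINT u:I|lborel. Phi f l h u)"
    unfolding set_lebesgue_integral_def
  proof (rule nn_integral_eq_integral)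
    show "integrable lborel (\<lambda>u. indicator I u *\<^sub>R Phi f l h u)"
      by (rule integrableI_bounded_set_indicator[where B="2*Ch"])
        (use Phi_bounds in \<open>auto simp: I_def\<close>)
    show "AE u in lborel. 0 \<le> indicator I u *\<^sub>R Phi f l h u"
      using Phi_bounds by simp
  qed
  finally have "ennreal (conv_pow f (2*l) x) \<le> ennreal (LINT u:I|lborel. Phi f l h u)" .
  moreover have "0 \<le> (LINT u:I|lborel. Phi f l h u)"
    unfolding set_lebesgue_integral_def by (rule Bochner_Integration.integral_nonneg) (use Phi_bounds in \<open>simp split: split_indicator\<close>)
  ultimately show ?thesis unfolding I_def by (simp add: ennreal_le_iff)
qed

end

theorem lemma3p3:
  fixes f h :: "real \<Rightarrow> real" and l :: nat
  assumes f_meas: "f \<in> borel_measurable borel"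
    and f_nonneg: "\<And>x. f x \<ge> 0"
    and f_int: "integrable lborel f"
    and f_prob: "(LINT x|lborel. f x) = 1"
    and f_bdd: "\<exists>C. \<forall>x. f x \<le> C"
    and h_meas: "h \<in> borel_measurable borel"
    and h_Linf: "\<exists>C. AE x in lborel. \<bar>h x\<bar> \<le> C"
    and h_nonneg: "AE x in lborel. h x \<ge> 0"
    and l_pos: "l \<ge> 1"
    and hyp: "\<And>a::real. Sup (conv_pow f l ` {a..<a+1})
                  \<le> (LINT w:{a-1..a+2}|lborel. h w)"
  shows "\<And>a::real. Sup (conv_pow f (2*l) ` {a..<a+1})
                  \<le> (LINT w:{a-1..a+2}|lborel. Phi f l h w)"
proof -
  fix a :: real
  obtain C where C: "\<And>x. f x \<le> C" using f_bdd by blast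
  obtain Ch where Ch: "AE x in lborel. \<bar>h x\<bar> \<le> Ch" using h_Linf by blast
  interpret cs2 f C h l Ch
    by unfold_locales (use assms C Ch in auto)
  show "Sup (conv_pow f (2*l) ` {a..<a+1}) \<le> (LINT w:{a-1..a+2}|lborel. Phi f l h w)"
    by (rule cSup_least) (auto intro: main_pt)
qed

end
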